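(* Let $\Omega$ be a compact metric space, $\varphi:\Omega\to\Omega$ continuous, and let $\{V_n\}\subset\mathcal{L}(X^* )$ be an ergodic operator sequence converging in the $\mathrm{W^*O}$-topology to an operator $Q$. Then for every $\varphi$-ergodic Borel probability measure $\mu$ on $\Omega$ there exists $\omega\in\Omega$ with $Q\delta_\omega=\mu$, i.e. $V_n\delta_\omega\to\mu$ weak-star.
   Context: $X=C(\Omega)$, $X^*$ the space of Radon measures, pairing $(x,\mu)$; $Ux=x\circ\varphi$, $V=U^*$. $\mathrm{W^*O}$-convergence $T_n\to T$ means $(x,T_n\mu)\to(x,T\mu)$ for all $x\in X,\mu\in X^*$. A sequence $\{V_n\}\subseteq\operatorname{co}\{V^k:k\in\mathbb{N}_0\}$ is ergodic if $(x,(\operatorname{Id}-V)V_n\mu)\to0$ for all $x\in X,\mu\in X^*$. $\delta_\omega$ denotes the Dirac measure at $\omega$. *)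

theory Defs
  imports "HOL-Analysis.Analysis" "HOL-Probability.Probability"
begin

text \<open>X = C(Omega) is modelled as the Banach space of (bounded) continuous real functions on
  the compact metric space (type) 'a; X* is its dual space of bounded linear functionals
  (identified with the Radon measures via the Riesz representation theorem).\<close>

type_synonym 'a Xsp = "'a \<Rightarrow>\<^sub>C real"
type_synonym 'a Xdual = "'a Xsp \<Rightarrow>\<^sub>L real"

definition Uop :: "('a::metric_space \<Rightarrow> 'a) \<Rightarrow> 'a Xsp \<Rightarrow>\<^sub>L 'a Xsp" where
  "Uop \<phi> = Blinfun (\<lambda>x. Bcontfun (apply_bcontfun x \<circ> \<phi>))"

definition Vop :: "('a::metric_space \<Rightarrow> 'a) \<Rightarrow> 'a Xdual \<Rightarrow>\<^sub>L 'a Xdual" where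
  "Vop \<phi> = Blinfun (\<lambda>\<mu>. \<mu> o\<^sub>L Uop \<phi>)"

definition Vpow :: "('a::metric_space \<Rightarrow> 'a) \<Rightarrow> nat \<Rightarrow> 'a Xdual \<Rightarrow>\<^sub>L 'a Xdual" where
  "Vpow \<phi> k = ((\<lambda>T. Vop \<phi> o\<^sub>L T) ^^ k) id_blinfun"

definition ergodic_seq :: "('a::metric_space \<Rightarrow> 'a) \<Rightarrow> (nat \<Rightarrow> 'a Xdual \<Rightarrow>\<^sub>L 'a Xdual) \<Rightarrow> bool" where
  "ergodic_seq \<phi> Vs \<longleftrightarrow>
     (\<forall>n. Vs n \<in> convex hull (range (Vpow \<phi>))) \<and>
     (\<forall>x \<mu>. (\<lambda>n. blinfun_apply ((id_blinfun - Vop \<phi>) (Vs n \<mu>)) x) \<longlonglongrightarrow> 0)"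

definition WsO_conv :: "(nat \<Rightarrow> 'a::metric_space Xdual \<Rightarrow>\<^sub>L 'a Xdual) \<Rightarrow> ('a Xdual \<Rightarrow>\<^sub>L 'a Xdual) \<Rightarrow> bool" where
  "WsO_conv Ts T \<longleftrightarrow> (\<forall>x \<mu>. (\<lambda>n. blinfun_apply (Ts n \<mu>) x) \<longlonglongrightarrow> blinfun_apply (T \<mu>) x)"

definition dirac_fun :: "'a::metric_space \<Rightarrow> 'a Xdual" where
  "dirac_fun \<omega> = Blinfun (\<lambda>x. apply_bcontfun x \<omega>)"

definition meas_fun :: "'a::metric_space measure \<Rightarrow> 'a Xdual" where
  "meas_fun \<mu> = Blinfun (\<lambda>x. \<integral>\<omega>. apply_bcontfun x \<omega> \<partial>\<mu>)"

definition phi_ergodic :: "('a::metric_space \<Rightarrow> 'a) \<Rightarrow> 'a measure \<Rightarrow> bool" where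
  "phi_ergodic \<phi> \<mu> \<longleftrightarrow> prob_space \<mu> \<and> sets \<mu> = sets borel \<and>
     \<phi> \<in> measurable \<mu> \<mu> \<and> distr \<mu> \<mu> \<phi> = \<mu> \<and>
     (\<forall>A \<in> sets \<mu>. \<phi> -` A = A \<longrightarrow> emeasure \<mu> A = 0 \<or> emeasure \<mu> A = 1)"

end

theory Submission
  imports Defs
begin

lemma comp_bcontfun:
  assumes "continuous_on UNIV (\<phi>::'a::metric_space \<Rightarrow> 'a)"
  shows "(apply_bcontfun (x::'a Xsp) \<circ> \<phi>) \<in> bcontfun"
proof (rule bcontfun_normI[where b="norm x"])
  show "continuous_on UNIV (apply_bcontfun x \<circ> \<phi>)"
    using assms by (intro continuous_on_compose) (auto intro: continuous_on_subset)
  show "norm ((apply_bcontfun x \<circ> \<phi>) y) \<le> norm x" for y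
    by (simp, metis norm_bounded real_norm_def)
qed

lemma dirac_apply: "blinfun_apply (dirac_fun \<omega>) x = apply_bcontfun x \<omega>"
proof -
  have "bounded_linear (\<lambda>x::'a::metric_space Xsp. apply_bcontfun x \<omega>)"
    by (rule bounded_linear_intro[where K=1]) (auto, metis norm_bounded real_norm_def)
  then show ?thesis unfolding dirac_fun_def by (simp add: bounded_linear_Blinfun_apply)
qed

lemma Uop_apply:
  assumes "continuous_on UNIV (\<phi>::'a::metric_space \<Rightarrow> 'a)"
  shows "apply_bcontfun (blinfun_apply (Uop \<phi>) x) y = apply_bcontfun x (\<phi> y)"
proof -
  have Bc: "apply_bcontfun (Bcontfun (apply_bcontfun x \<circ> \<phi>)) y = apply_bcontfun x (\<phi> y)" for x :: "'a Xsp" and y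
  proof -
    have "apply_bcontfun (Bcontfun (apply_bcontfun x \<circ> \<phi>)) = apply_bcontfun x \<circ> \<phi>"
      by (rule Bcontfun_inverse[OF comp_bcontfun[OF assms]])
    then show ?thesis by simp
  qed
  have bl: "bounded_linear (\<lambda>x::'a Xsp. Bcontfun (apply_bcontfun x \<circ> \<phi>))"
  proof (rule bounded_linear_intro[where K=1])
    fix x y :: "'a Xsp" and r :: real
    show "Bcontfun (apply_bcontfun (x + y) \<circ> \<phi>) = Bcontfun (apply_bcontfun x \<circ> \<phi>) + Bcontfun (apply_bcontfun y \<circ> \<phi>)"
      by (rule bcontfun_eqI) (simp only: Bc, simp add: Bc)
    show "Bcontfun (apply_bcontfun (r *\<^sub>R x) \<circ> \<phi>) = r *\<^sub>R Bcontfun (apply_bcontfun x \<circ> \<phi>)"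
      by (rule bcontfun_eqI) (simp only: Bc, simp add: Bc)
    show "norm (Bcontfun (apply_bcontfun x \<circ> \<phi>)) \<le> norm x * 1"
      by (rule norm_bound) (simp only: Bc, simp, metis norm_bounded real_norm_def)
  qed
  show ?thesis unfolding Uop_def bounded_linear_Blinfun_apply[OF bl] Bc ..
qed

lemma Vop_apply: "blinfun_apply (Vop \<phi>) m = m o\<^sub>L Uop \<phi>"
proof -
  have "bounded_linear (\<lambda>m::'a::metric_space Xdual. m o\<^sub>L Uop \<phi>)"
    by (rule bounded_bilinear.bounded_linear_left[OF bounded_bilinear_blinfun_compose])
  then show ?thesis unfolding Vop_def by (simp add: bounded_linear_Blinfun_apply)
qed

lemma Vpow_apply:
  assumes "continuous_on UNIV (\<phi>::'a::metric_space \<Rightarrow> 'a)"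
  shows "blinfun_apply (blinfun_apply (Vpow \<phi> k) (dirac_fun \<omega>)) x = apply_bcontfun x ((\<phi>^^k) \<omega>)"
proof (induction k arbitrary: x)
  case 0
  then show ?case by (simp add: Vpow_def dirac_apply)
next
  case (Suc k)
  have "Vpow \<phi> (Suc k) = Vop \<phi> o\<^sub>L Vpow \<phi> k" by (simp add: Vpow_def)
  then have "blinfun_apply (blinfun_apply (Vpow \<phi> (Suc k)) (dirac_fun \<omega>)) x
     = blinfun_apply (blinfun_apply (Vpow \<phi> k) (dirac_fun \<omega>)) (blinfun_apply (Uop \<phi>) x)"
    by (simp add: Vop_apply)
  also have "\<dots> = apply_bcontfun x (\<phi> ((\<phi>^^k) \<omega>))" using Suc Uop_apply[OF assms] by simp
  finally show ?case by simp
qed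

lemma space_borelish: "sets M = sets borel \<Longrightarrow> space M = UNIV"
  by (metis sets_eq_imp_space_eq space_borel)

lemma meas_bcont:
  assumes "sets M = sets borel"
  shows "apply_bcontfun (x::'a::metric_space Xsp) \<in> borel_measurable M"
  using borel_measurable_continuous_onI[of "apply_bcontfun x"] measurable_cong_sets[OF assms refl]
  by auto

lemma integrable_bcont:
  assumes "prob_space M" "sets M = sets borel"
  shows "integrable M (apply_bcontfun (x::'a::metric_space Xsp))"
proof -
  interpret prob_space M by fact
  show ?thesis
    by (rule integrable_const_bound[where B="norm x"]) (auto intro!: AE_I2 simp: meas_bcont[OF assms(2)], metis norm_bounded real_norm_def)
qed

lemma meas_fun_apply:
  assumes "prob_space M" "sets M = sets borel"
  shows "blinfun_apply (meas_fun M) x = (\<integral>\<omega>. apply_bcontfun x \<omega> \<partial>M)"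
proof -
  interpret prob_space M by fact
  have "bounded_linear (\<lambda>x::'a Xsp. \<integral>\<omega>. apply_bcontfun x \<omega> \<partial>M)"
  proof (rule bounded_linear_intro[where K=1])
    fix x y :: "'a Xsp" and r :: real
    show "(\<integral>\<omega>. apply_bcontfun (x + y) \<omega> \<partial>M) = (\<integral>\<omega>. apply_bcontfun x \<omega> \<partial>M) + (\<integral>\<omega>. apply_bcontfun y \<omega> \<partial>M)"
      using integrable_bcont[OF assms, of x] integrable_bcont[OF assms, of y] by simp
    show "(\<integral>\<omega>. apply_bcontfun (r *\<^sub>R x) \<omega> \<partial>M) = r *\<^sub>R (\<integral>\<omega>. apply_bcontfun x \<omega> \<partial>M)"
      by simp
    have "norm (\<integral>\<omega>. apply_bcontfun x \<omega> \<partial>M) \<le> (\<integral>\<omega>. norm (apply_bcontfun x \<omega>) \<partial>M)"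
      by (rule integral_norm_bound)
    also have "\<dots> \<le> (\<integral>\<omega>. norm x \<partial>M)"
      by (rule integral_mono) (auto simp: integrable_bcont[OF assms], metis norm_bounded real_norm_def)
    finally have "norm (\<integral>\<omega>. apply_bcontfun x \<omega> \<partial>M) \<le> (\<integral>\<omega>. norm x \<partial>M)" .
    then show "norm (\<integral>\<omega>. apply_bcontfun x \<omega> \<partial>M) \<le> norm x * 1" by (simp add: prob_space)
  qed
  then show ?thesis unfolding meas_fun_def by (simp add: bounded_linear_Blinfun_apply)
qed

lemma integral_funpow_inv:
  assumes erg: "phi_ergodic \<phi> \<mu>" and f: "f \<in> borel_measurable borel"
  shows "(\<integral>\<omega>. (f::'a::metric_space \<Rightarrow> real) ((\<phi>^^k) \<omega>) \<partial>\<mu>) = (\<integral>\<omega>. f \<omega> \<partial>\<mu>)"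
proof (induction k)
  case 0
  then show ?case by simp
next
  case (Suc k)
  from erg have ph: "\<phi> \<in> measurable \<mu> \<mu>" and d: "distr \<mu> \<mu> \<phi> = \<mu>" and s: "sets \<mu> = sets borel"
    unfolding phi_ergodic_def by auto
  have ph': "\<phi> \<in> measurable borel borel" using ph measurable_cong_sets[OF s s] by auto
  have fk: "(\<lambda>\<omega>. f ((\<phi>^^k) \<omega>)) \<in> borel_measurable \<mu>"
  proof -
    have "(\<phi>^^k) \<in> measurable borel borel"
      by (induction k) (auto intro: measurable_compose[OF _ ph'])
    then have "(\<lambda>\<omega>. f ((\<phi>^^k) \<omega>)) \<in> borel_measurable borel"
      using f by (rule measurable_compose)
    then show ?thesis using measurable_cong_sets[OF s refl] by auto
  qed
  have "(\<integral>\<omega>. f ((\<phi>^^Suc k) \<omega>) \<partial>\<mu>) = (\<integral>\<omega>. f ((\<phi>^^k) (\<phi> \<omega>)) \<partial>\<mu>)"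
    by (simp add: funpow_swap1)
  also have "\<dots> = integral\<^sup>L (distr \<mu> \<mu> \<phi>) (\<lambda>\<omega>. f ((\<phi>^^k) \<omega>))"
    by (rule integral_distr[OF ph fk, symmetric])
  also have "\<dots> = (\<integral>\<omega>. f ((\<phi>^^k) \<omega>) \<partial>\<mu>)" using d by simp
  finally show ?case using Suc by simp
qed

lemma ergodic_const:
  assumes erg: "phi_ergodic \<phi> \<mu>" and f: "f \<in> borel_measurable borel"
    and bd: "\<And>\<omega>. \<bar>f \<omega>\<bar> \<le> B" and inv: "\<And>\<omega>. f (\<phi> \<omega>) = f \<omega>"
  shows "AE \<omega> in \<mu>. (f::'a::metric_space \<Rightarrow> real) \<omega> = (\<integral>\<omega>. f \<omega> \<partial>\<mu>)"
proof -
  from erg have P: "prob_space \<mu>" and s: "sets \<mu> = sets borel"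
    and E: "\<And>A. A \<in> sets \<mu> \<Longrightarrow> \<phi> -` A = A \<Longrightarrow> emeasure \<mu> A = 0 \<or> emeasure \<mu> A = 1"
    unfolding phi_ergodic_def by auto
  interpret prob_space \<mu> by fact
  have sp: "space \<mu> = UNIV" using space_borelish[OF s] .
  have fm: "f \<in> borel_measurable \<mu>" using f measurable_cong_sets[OF s refl] by auto
  have fi: "integrable \<mu> f"
    by (rule integrable_const_bound[where B=B]) (auto simp: bd fm)
  define c where "c = (\<integral>\<omega>. f \<omega> \<partial>\<mu>)"
  have key: "AE \<omega> in \<mu>. \<not> (s * f \<omega> > s * c)" if "s = 1 \<or> s = -1" for s :: real
  proof -
    define A where "A = {\<omega>. s * f \<omega> > s * c}"
    have "{\<omega>\<in>space \<mu>. s * c < s * f \<omega>} \<in> sets \<mu>" using fm by measurable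
    then have A: "A \<in> sets \<mu>" unfolding A_def sp by simp
    have pA: "\<phi> -` A = A" unfolding A_def using inv by auto
    have "emeasure \<mu> A = 0"
    proof (rule ccontr)
      assume "emeasure \<mu> A \<noteq> 0"
      then have "emeasure \<mu> A = 1" using E[OF A pA] by auto
      then have "prob A = 1" by (simp add: emeasure_eq_measure)
      then have ae: "AE \<omega> in \<mu>. \<omega> \<in> A" using AE_in_set_eq_1[OF A] by simp
      have gi: "integrable \<mu> (\<lambda>\<omega>. s * f \<omega> - s * c)" using fi by auto
      have "(\<integral>\<omega>. s * f \<omega> - s * c \<partial>\<mu>) = s * c - s * c"
        using fi by (simp add: c_def prob_space)
      then have "(\<integral>\<omega>. s * f \<omega> - s * c \<partial>\<mu>) = 0" by simp
      moreover have "AE \<omega> in \<mu>. 0 \<le> s * f \<omega> - s * c" using ae unfolding A_def by auto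
      ultimately have "AE \<omega> in \<mu>. s * f \<omega> - s * c = 0"
        using integral_nonneg_eq_0_iff_AE[OF gi] by simp
      moreover have "AE \<omega> in \<mu>. 0 < s * f \<omega> - s * c" using ae unfolding A_def by simp
      ultimately have "AE \<omega> in \<mu>. False" by eventually_elim (metis less_irrefl)
      then show False by simp
    qed
    moreover have "{\<omega>\<in>space \<mu>. \<not> \<not> (s * f \<omega> > s * c)} = A" unfolding A_def sp by simp
    ultimately show ?thesis using AE_iff_measurable[OF A, of "\<lambda>\<omega>. \<not> (s * f \<omega> > s * c)"] by simp
  qed
  have k1: "AE \<omega> in \<mu>. \<not> (1 * f \<omega> > 1 * c)" by (rule key) simp
  have k2: "AE \<omega> in \<mu>. \<not> ((-1) * f \<omega> > (-1) * c)" by (rule key) simp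
  from k1 k2 show ?thesis unfolding c_def[symmetric]
    by eventually_elim linarith
qed

lemma funpow_cont:
  assumes "continuous_on UNIV (\<phi>::'a::topological_space \<Rightarrow> 'a)"
  shows "continuous_on UNIV (\<phi>^^k)"
proof (induction k)
  case 0 then show ?case by (simp add: continuous_on_id')
next
  case (Suc k)
  have "continuous_on UNIV (\<phi> \<circ> (\<phi>^^k))"
    by (rule continuous_on_compose[OF Suc]) (rule continuous_on_subset[OF assms], simp)
  then show ?case by simp
qed

lemma conv_repr:
  assumes cont: "continuous_on UNIV (\<phi>::'a::metric_space \<Rightarrow> 'a)"
    and T: "T \<in> convex hull (range (Vpow \<phi>))"
  obtains S :: "('a::metric_space Xdual \<Rightarrow>\<^sub>L 'a Xdual) set" and u kk where "finite S" "\<forall>v\<in>S. 0 \<le> u v" "sum u S = 1"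
    "\<And>\<omega> x. blinfun_apply (blinfun_apply T (dirac_fun \<omega>)) x = (\<Sum>v\<in>S. u v * apply_bcontfun x ((\<phi>^^kk v) \<omega>))"
proof -
  from T obtain S u where S: "finite S" "S \<subseteq> range (Vpow \<phi>)" "\<forall>x\<in>S. 0 \<le> u x" "sum u S = 1"
    and Te: "(\<Sum>v\<in>S. u v *\<^sub>R v) = T"
    using T[unfolded convex_hull_explicit] by (auto simp del: mem_Collect_eq)
  define kk where "kk v = (SOME k. v = Vpow \<phi> k)" for v
  have kk: "v = Vpow \<phi> (kk v)" if "v \<in> S" for v
  proof -
    from that S(2) obtain k where "v = Vpow \<phi> k" by blast
    then show ?thesis unfolding kk_def by (rule someI[of "\<lambda>k. v = Vpow \<phi> k"])
  qed
  have rep: "blinfun_apply (blinfun_apply T (dirac_fun \<omega>)) x = (\<Sum>v\<in>S. u v * apply_bcontfun x ((\<phi>^^kk v) \<omega>))" for \<omega> x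
  proof -
    have "blinfun_apply (blinfun_apply T (dirac_fun \<omega>)) x = (\<Sum>v\<in>S. u v * blinfun_apply (blinfun_apply v (dirac_fun \<omega>)) x)"
      unfolding Te[symmetric] by (simp add: blinfun.sum_left blinfun.scaleR_left)
    also have "\<dots> = (\<Sum>v\<in>S. u v * apply_bcontfun x ((\<phi>^^kk v) \<omega>))"
    proof (rule sum.cong[OF refl])
      fix v assume "v \<in> S"
      have "blinfun_apply (blinfun_apply v (dirac_fun \<omega>)) x = blinfun_apply (blinfun_apply (Vpow \<phi> (kk v)) (dirac_fun \<omega>)) x"
        by (rule arg_cong[where f="\<lambda>v. blinfun_apply (blinfun_apply v (dirac_fun \<omega>)) x", OF kk[OF \<open>v \<in> S\<close>]])
      then show "u v * blinfun_apply (blinfun_apply v (dirac_fun \<omega>)) x = u v * apply_bcontfun x ((\<phi>^^kk v) \<omega>)"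
        using Vpow_apply[OF cont] by simp
    qed
    finally show ?thesis .
  qed
  show ?thesis by (rule that[OF S(1) S(3) S(4) rep])
qed

lemma T_props:
  assumes cont: "continuous_on UNIV (\<phi>::'a::metric_space \<Rightarrow> 'a)"
    and T: "T \<in> convex hull (range (Vpow \<phi>))"
    and erg: "phi_ergodic \<phi> \<mu>"
  shows "\<bar>blinfun_apply (blinfun_apply T (dirac_fun \<omega>)) x\<bar> \<le> norm x"
    and "continuous_on UNIV (\<lambda>\<omega>. blinfun_apply (blinfun_apply T (dirac_fun \<omega>)) x)"
    and "(\<integral>\<omega>. blinfun_apply (blinfun_apply T (dirac_fun \<omega>)) x \<partial>\<mu>) = (\<integral>\<omega>. apply_bcontfun x \<omega> \<partial>\<mu>)"
    and "blinfun_apply (blinfun_apply T (dirac_fun \<omega>)) (blinfun_apply (Uop \<phi>) x) = blinfun_apply (blinfun_apply T (dirac_fun (\<phi> \<omega>))) x"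
proof -
  obtain S :: "('a Xdual \<Rightarrow>\<^sub>L 'a Xdual) set" and u kk where S: "finite S" "\<forall>v\<in>S. 0 \<le> u v" "sum u S = 1"
    and Te: "\<And>\<omega> x. blinfun_apply (blinfun_apply T (dirac_fun \<omega>)) x = (\<Sum>v\<in>S. u v * apply_bcontfun x ((\<phi>^^kk v) \<omega>))"
    by (rule conv_repr[OF cont T]) blast
  have "\<bar>\<Sum>v\<in>S. u v * apply_bcontfun x ((\<phi>^^kk v) \<omega>)\<bar> \<le> (\<Sum>v\<in>S. \<bar>u v * apply_bcontfun x ((\<phi>^^kk v) \<omega>)\<bar>)"
    by (rule sum_abs)
  also have "\<dots> \<le> (\<Sum>v\<in>S. u v * norm x)"
  proof (rule sum_mono)
    fix v assume "v \<in> S"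
    then have "0 \<le> u v" using S by auto
    moreover have "\<bar>apply_bcontfun x ((\<phi>^^kk v) \<omega>)\<bar> \<le> norm x" by (metis norm_bounded real_norm_def)
    ultimately show "\<bar>u v * apply_bcontfun x ((\<phi>^^kk v) \<omega>)\<bar> \<le> u v * norm x"
      by (simp add: abs_mult mult_left_mono)
  qed
  also have "\<dots> = norm x" using S by (simp add: sum_distrib_right[symmetric])
  finally show "\<bar>blinfun_apply (blinfun_apply T (dirac_fun \<omega>)) x\<bar> \<le> norm x" unfolding Te .
  have cx: "continuous_on UNIV (\<lambda>\<omega>. apply_bcontfun x ((\<phi>^^k) \<omega>))" for k
    using continuous_on_compose[OF funpow_cont[OF cont, of k], of "apply_bcontfun x"]
    by (simp add: o_def)
  show "continuous_on UNIV (\<lambda>\<omega>. blinfun_apply (blinfun_apply T (dirac_fun \<omega>)) x)"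
    unfolding Te by (intro continuous_on_sum continuous_on_mult_left cx)
  from erg have P: "prob_space \<mu>" and s: "sets \<mu> = sets borel" unfolding phi_ergodic_def by auto
  interpret prob_space \<mu> by fact
  have mx: "(\<lambda>\<omega>. apply_bcontfun x ((\<phi>^^k) \<omega>)) \<in> borel_measurable \<mu>" for k
    using borel_measurable_continuous_onI[OF cx[of k]] measurable_cong_sets[OF s refl] by auto
  have ix: "integrable \<mu> (\<lambda>\<omega>. apply_bcontfun x ((\<phi>^^k) \<omega>))" for k
    by (rule integrable_const_bound[where B="norm x"]) (auto intro!: AE_I2 simp: mx, metis norm_bounded real_norm_def)
  have "(\<integral>\<omega>. (\<Sum>v\<in>S. u v * apply_bcontfun x ((\<phi>^^kk v) \<omega>)) \<partial>\<mu>) = (\<Sum>v\<in>S. u v * (\<integral>\<omega>. apply_bcontfun x ((\<phi>^^kk v) \<omega>) \<partial>\<mu>))"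
    using ix by (simp add: integral_sum)
  also have "\<dots> = (\<Sum>v\<in>S. u v * (\<integral>\<omega>. apply_bcontfun x \<omega> \<partial>\<mu>))"
    using integral_funpow_inv[OF erg borel_measurable_continuous_onI[OF continuous_on_apply_bcontfun]] by simp
  also have "\<dots> = (\<integral>\<omega>. apply_bcontfun x \<omega> \<partial>\<mu>)" using S by (simp add: sum_distrib_right[symmetric])
  finally show "(\<integral>\<omega>. blinfun_apply (blinfun_apply T (dirac_fun \<omega>)) x \<partial>\<mu>) = (\<integral>\<omega>. apply_bcontfun x \<omega> \<partial>\<mu>)"
    unfolding Te .
  show "blinfun_apply (blinfun_apply T (dirac_fun \<omega>)) (blinfun_apply (Uop \<phi>) x) = blinfun_apply (blinfun_apply T (dirac_fun (\<phi> \<omega>))) x"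
    unfolding Te Uop_apply[OF cont] by (simp add: funpow_swap1)
qed

definition monom_d :: "'a::metric_space list \<Rightarrow> 'a \<Rightarrow> real" where
  "monom_d qs \<omega> = prod_list (map (\<lambda>q. dist \<omega> q) qs)"

definition val :: "(real \<times> 'a::metric_space list) list \<Rightarrow> 'a \<Rightarrow> real" where
  "val L \<omega> = sum_list (map (\<lambda>p. fst p * monom_d (snd p) \<omega>) L)"

definition mul :: "(real \<times> 'a list) list \<Rightarrow> (real \<times> 'a list) list \<Rightarrow> (real \<times> 'a list) list" where
  "mul L1 L2 = concat (map (\<lambda>p1. map (\<lambda>p2. (fst p1 * fst p2, snd p1 @ snd p2)) L2) L1)"

lemma monom_d_append: "monom_d (a @ b) \<omega> = monom_d a \<omega> * monom_d b \<omega>"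
  by (simp add: monom_d_def)

lemma monom_d_cont: "continuous_on UNIV (monom_d qs)"
proof (induction qs)
  case Nil then show ?case by (simp add: monom_d_def)
next
  case (Cons q qs)
  have "monom_d (q # qs) = (\<lambda>\<omega>. dist \<omega> q * monom_d qs \<omega>)" by (simp add: monom_d_def fun_eq_iff)
  then show ?case using Cons by (auto intro!: continuous_intros)
qed

lemma val_cont: "continuous_on UNIV (val L)"
proof (induction L)
  case Nil then show ?case by (simp add: val_def)
next
  case (Cons p L)
  have "val (p # L) = (\<lambda>\<omega>. fst p * monom_d (snd p) \<omega> + val L \<omega>)" by (simp add: val_def fun_eq_iff)
  then show ?case using Cons monom_d_cont by (auto intro!: continuous_intros)
qed

lemma val_append: "val (L1 @ L2) \<omega> = val L1 \<omega> + val L2 \<omega>"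
  by (simp add: val_def)

lemma val_map: "val (map (\<lambda>p2. (c * fst p2, qs @ snd p2)) L2) \<omega> = c * monom_d qs \<omega> * val L2 \<omega>"
  by (induction L2) (simp_all add: val_def monom_d_append algebra_simps)

lemma val_mul: "val (mul L1 L2) \<omega> = val L1 \<omega> * val L2 \<omega>"
proof (induction L1)
  case Nil then show ?case by (simp add: val_def mul_def)
next
  case (Cons p L1)
  have "mul (p # L1) L2 = map (\<lambda>p2. (fst p * fst p2, snd p @ snd p2)) L2 @ mul L1 L2"
    by (simp add: mul_def)
  then have "val (mul (p # L1) L2) \<omega> = fst p * monom_d (snd p) \<omega> * val L2 \<omega> + val L1 \<omega> * val L2 \<omega>"
    using Cons by (simp add: val_append val_map)
  also have "\<dots> = val (p # L1) \<omega> * val L2 \<omega>" by (simp add: val_def algebra_simps)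
  finally show ?case .
qed

lemma set_mul: "p \<in> set (mul L1 L2) \<Longrightarrow> \<exists>p1\<in>set L1. \<exists>p2\<in>set L2. snd p = snd p1 @ snd p2"
  by (auto simp: mul_def) (metis snd_conv)

lemma cont_bcontfun:
  assumes "compact (UNIV :: 'a::metric_space set)" "continuous_on UNIV (f :: 'a \<Rightarrow> real)"
  shows "f \<in> bcontfun"
  unfolding bcontfun_def using assms compact_imp_bounded compact_continuous_image by auto

lemma lin_val:
  assumes "compact (UNIV :: 'a::metric_space set)"
  shows "blinfun_apply (\<Lambda> :: 'a Xdual) (Bcontfun (val L)) = sum_list (map (\<lambda>p. fst p * blinfun_apply \<Lambda> (Bcontfun (monom_d (snd p)))) L)"
proof (induction L)
  case Nil
  have "Bcontfun (val []) = (0 :: 'a Xsp)"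
    by (rule bcontfun_eqI) (simp add: Bcontfun_inverse[OF cont_bcontfun[OF assms val_cont]] val_def)
  then show ?case by simp
next
  case (Cons p L)
  have "Bcontfun (val (p # L)) = fst p *\<^sub>R Bcontfun (monom_d (snd p)) + Bcontfun (val L)"
    by (rule bcontfun_eqI) (simp add: Bcontfun_inverse[OF cont_bcontfun[OF assms val_cont]]
        Bcontfun_inverse[OF cont_bcontfun[OF assms monom_d_cont]] val_def)
  then show ?case using Cons by (simp add: blinfun.add_right blinfun.scaleR_right)
qed

lemma countable_dense:
  assumes "compact (UNIV :: 'a::metric_space set)"
  obtains D :: "'a::metric_space set" where "countable D" "\<And>\<omega> e. e > 0 \<Longrightarrow> \<exists>q\<in>D. dist \<omega> q < e"
proof -
  have "\<forall>n::nat. \<exists>k. finite k \<and> (UNIV::'a set) \<subseteq> (\<Union>x\<in>k. ball x (inverse (real (Suc n))))"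
    using assms unfolding compact_eq_totally_bounded by auto
  then obtain K where K: "\<And>n. finite (K n)" "\<And>n. (UNIV::'a set) \<subseteq> (\<Union>x\<in>K n. ball x (inverse (real (Suc n))))"
    by metis
  define D where "D = (\<Union>n. K n)"
  have "countable D" unfolding D_def using K(1) by (auto intro: countable_finite)
  moreover have "\<exists>q\<in>D. dist \<omega> q < e" if e: "e > 0" for \<omega> e
  proof -
    obtain n where n: "inverse (real (Suc n)) < e" using reals_Archimedean[OF e] by blast
    from K(2)[of n] obtain q where "q \<in> K n" "\<omega> \<in> ball q (inverse (real (Suc n)))" by blast
    then have "q \<in> D" "dist \<omega> q < e" unfolding D_def using n by (auto simp: dist_commute)
    then show ?thesis by blast
  qed
  ultimately show ?thesis using that by blast
qed

lemma ring_R: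
  assumes cpt: "compact (UNIV :: 'a::metric_space set)"
    and D: "\<And>\<omega> e. e > 0 \<Longrightarrow> \<exists>q\<in>D. dist \<omega> q < e"
  shows "function_ring_on {val L | L. \<forall>p\<in>set L. set (snd p) \<subseteq> (D :: 'a set)} UNIV"
proof
  show "compact (UNIV :: 'a set)" by fact
  fix f assume "f \<in> {val L | L. \<forall>p\<in>set L. set (snd p) \<subseteq> D}"
  then show "continuous_on UNIV f" using val_cont by auto
next
  fix f g assume "f \<in> {val L | L. \<forall>p\<in>set L. set (snd p) \<subseteq> D}" "g \<in> {val L | L. \<forall>p\<in>set L. set (snd p) \<subseteq> D}"
  then obtain L1 L2 where L: "f = val L1" "\<forall>p\<in>set L1. set (snd p) \<subseteq> D" "g = val L2" "\<forall>p\<in>set L2. set (snd p) \<subseteq> D"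
    by blast
  have "(\<lambda>x. f x + g x) = val (L1 @ L2)" using L by (simp add: fun_eq_iff val_append)
  moreover have "\<forall>p\<in>set (L1 @ L2). set (snd p) \<subseteq> D" using L by auto
  ultimately show "(\<lambda>x. f x + g x) \<in> {val L | L. \<forall>p\<in>set L. set (snd p) \<subseteq> D}" by blast
  have "(\<lambda>x. f x * g x) = val (mul L1 L2)" using L by (simp add: fun_eq_iff val_mul)
  moreover have "\<forall>p\<in>set (mul L1 L2). set (snd p) \<subseteq> D"
  proof
    fix p assume "p \<in> set (mul L1 L2)"
    then obtain p1 p2 where "p1 \<in> set L1" "p2 \<in> set L2" "snd p = snd p1 @ snd p2" using set_mul by blast
    then show "set (snd p) \<subseteq> D" using L by auto
  qed
  ultimately show "(\<lambda>x. f x * g x) \<in> {val L | L. \<forall>p\<in>set L. set (snd p) \<subseteq> D}" by blast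
next
  fix c :: real
  have "(\<lambda>_. c) = val [(c, [])]" by (simp add: fun_eq_iff val_def monom_d_def)
  then show "(\<lambda>_::'a. c) \<in> {val L | L. \<forall>p\<in>set L. set (snd p) \<subseteq> D}" by force
next
  fix x y :: 'a assume "x \<noteq> y"
  then have "dist x y / 2 > 0" by simp
  then obtain q where q: "q \<in> D" "dist x q < dist x y / 2" using D by blast
  have "dist x y \<le> dist x q + dist y q" by (rule dist_triangle2)
  then have ne: "dist x q \<noteq> dist y q" using q by linarith
  have v: "val [(1, [q])] = (\<lambda>\<omega>. dist \<omega> q)" by (simp add: fun_eq_iff val_def monom_d_def)
  have "val [(1, [q])] \<in> {val L | L. \<forall>p\<in>set L. set (snd p) \<subseteq> D}" using q by force
  moreover have "val [(1, [q])] x \<noteq> val [(1, [q])] y" using ne v by simp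
  ultimately show "\<exists>f\<in>{val L | L. \<forall>p\<in>set L. set (snd p) \<subseteq> D}. f x \<noteq> f y" by blast
qed

lemma small_zero:
  fixes a C :: real
  assumes "C \<ge> 0" "\<And>e. e > 0 \<Longrightarrow> \<bar>a\<bar> \<le> C * e"
  shows "a = 0"
proof (rule ccontr)
  assume "a \<noteq> 0"
  then have pos: "\<bar>a\<bar> / (2 * (C + 1)) > 0" using assms(1) by simp
  have "\<bar>a\<bar> \<le> C * (\<bar>a\<bar> / (2 * (C + 1)))" using assms(2)[OF pos] .
  also have "\<dots> < \<bar>a\<bar>"
  proof -
    have ap: "\<bar>a\<bar> > 0" using \<open>a \<noteq> 0\<close> by simp
    have "\<bar>a\<bar> * (2 * (C + 1)) - C * \<bar>a\<bar> = \<bar>a\<bar> * (C + 2)" by (simp add: algebra_simps)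
    also have "\<dots> > 0" using ap assms(1) by simp
    finally have h: "C * \<bar>a\<bar> < \<bar>a\<bar> * (2 * (C + 1))" by simp
    have "C * (\<bar>a\<bar> / (2 * (C + 1))) = (C * \<bar>a\<bar>) / (2 * (C + 1))" by simp
    also have "\<dots> < \<bar>a\<bar>" using h assms(1) by (simp add: pos_divide_less_eq)
    finally show ?thesis .
  qed
  finally show False by simp
qed

theorem lemma4p1:
  fixes \<phi> :: "'a::metric_space \<Rightarrow> 'a"
    and Vs :: "nat \<Rightarrow> 'a Xdual \<Rightarrow>\<^sub>L 'a Xdual"
    and Q :: "'a Xdual \<Rightarrow>\<^sub>L 'a Xdual"
    and \<mu> :: "'a measure"
  assumes "compact (UNIV :: 'a set)"
    and "continuous_on UNIV \<phi>"
    and "ergodic_seq \<phi> Vs"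
    and "WsO_conv Vs Q"
    and "phi_ergodic \<phi> \<mu>"
  shows "\<exists>\<omega>. Q (dirac_fun \<omega>) = meas_fun \<mu> \<and>
           (\<forall>x. (\<lambda>n. blinfun_apply (Vs n (dirac_fun \<omega>)) x) \<longlonglongrightarrow> blinfun_apply (meas_fun \<mu>) x)"
proof -
  note cpt = assms(1) and cont = assms(2) and erg = assms(5)
  from assms(3) have hull: "\<And>n. Vs n \<in> convex hull (range (Vpow \<phi>))"
    and E: "\<And>x m. (\<lambda>n. blinfun_apply ((id_blinfun - Vop \<phi>) (Vs n m)) x) \<longlonglongrightarrow> 0"
    unfolding ergodic_seq_def by auto
  from assms(4) have W: "\<And>x m. (\<lambda>n. blinfun_apply (Vs n m) x) \<longlonglongrightarrow> blinfun_apply (Q m) x"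
    unfolding WsO_conv_def by auto
  from erg have P: "prob_space \<mu>" and s: "sets \<mu> = sets borel" unfolding phi_ergodic_def by auto
  interpret prob_space \<mu> by fact
  define xb where "xb x \<omega> = blinfun_apply (Q (dirac_fun \<omega>)) x" for x \<omega>
  have Flim: "(\<lambda>n. blinfun_apply (Vs n (dirac_fun \<omega>)) x) \<longlonglongrightarrow> xb x \<omega>" for x \<omega>
    unfolding xb_def by (rule W)
  have inv: "xb x (\<phi> \<omega>) = xb x \<omega>" for x \<omega>
  proof -
    have "blinfun_apply ((id_blinfun - Vop \<phi>) (Vs n (dirac_fun \<omega>))) x
        = blinfun_apply (Vs n (dirac_fun \<omega>)) x - blinfun_apply (Vs n (dirac_fun (\<phi> \<omega>))) x" for n
      using T_props(4)[OF cont hull erg] by (simp add: blinfun.diff_left Vop_apply)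
    then have d: "(\<lambda>n. blinfun_apply (Vs n (dirac_fun \<omega>)) x - blinfun_apply (Vs n (dirac_fun (\<phi> \<omega>))) x) \<longlonglongrightarrow> 0"
      using E[where m="dirac_fun \<omega>" and x=x] by simp
    have "(\<lambda>n. blinfun_apply (Vs n (dirac_fun \<omega>)) x - (blinfun_apply (Vs n (dirac_fun \<omega>)) x - blinfun_apply (Vs n (dirac_fun (\<phi> \<omega>))) x)) \<longlonglongrightarrow> xb x \<omega> - 0"
      by (intro tendsto_diff Flim d)
    then have "(\<lambda>n. blinfun_apply (Vs n (dirac_fun (\<phi> \<omega>))) x) \<longlonglongrightarrow> xb x \<omega>" by simp
    from LIMSEQ_unique[OF Flim this] show ?thesis .
  qed
  have Fcont: "continuous_on UNIV (\<lambda>\<omega>. blinfun_apply (Vs n (dirac_fun \<omega>)) x)" for n x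
    by (rule T_props(2)[OF cont hull erg])
  have meas: "xb x \<in> borel_measurable borel" for x
    by (rule borel_measurable_LIMSEQ_real[OF Flim]) (rule borel_measurable_continuous_onI[OF Fcont])
  have Fb: "\<bar>blinfun_apply (Vs n (dirac_fun \<omega>)) x\<bar> \<le> norm x" for n \<omega> x
    by (rule T_props(1)[OF cont hull erg])
  have xbb: "\<bar>xb x \<omega>\<bar> \<le> norm x" for x \<omega>
    by (rule LIMSEQ_le_const2[OF tendsto_rabs[OF Flim]]) (use Fb in auto)
  have int: "(\<integral>\<omega>. xb x \<omega> \<partial>\<mu>) = (\<integral>\<omega>. apply_bcontfun x \<omega> \<partial>\<mu>)" for x
  proof -
    have "(\<lambda>n. \<integral>\<omega>. blinfun_apply (Vs n (dirac_fun \<omega>)) x \<partial>\<mu>) \<longlonglongrightarrow> (\<integral>\<omega>. xb x \<omega> \<partial>\<mu>)"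
    proof (rule integral_dominated_convergence[where w="\<lambda>_. norm x"])
      show "xb x \<in> borel_measurable \<mu>" using meas measurable_cong_sets[OF s refl] by auto
      show "(\<lambda>\<omega>. blinfun_apply (Vs n (dirac_fun \<omega>)) x) \<in> borel_measurable \<mu>" for n
        using borel_measurable_continuous_onI[OF Fcont] measurable_cong_sets[OF s refl] by auto
      show "integrable \<mu> (\<lambda>_. norm x)" by simp
      show "AE \<omega> in \<mu>. (\<lambda>n. blinfun_apply (Vs n (dirac_fun \<omega>)) x) \<longlonglongrightarrow> xb x \<omega>" using Flim by simp
      show "AE \<omega> in \<mu>. norm (blinfun_apply (Vs n (dirac_fun \<omega>)) x) \<le> norm x" for n using Fb by simp
    qed
    moreover have "(\<integral>\<omega>. blinfun_apply (Vs n (dirac_fun \<omega>)) x \<partial>\<mu>) = (\<integral>\<omega>. apply_bcontfun x \<omega> \<partial>\<mu>)" for n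
      by (rule T_props(3)[OF cont hull erg])
    ultimately have "(\<lambda>n. (\<integral>\<omega>. apply_bcontfun x \<omega> \<partial>\<mu>)) \<longlonglongrightarrow> (\<integral>\<omega>. xb x \<omega> \<partial>\<mu>)" by simp
    then show ?thesis using LIMSEQ_const_iff by metis
  qed
  have ae: "AE \<omega> in \<mu>. xb x \<omega> = blinfun_apply (meas_fun \<mu>) x" for x
    using ergodic_const[OF erg meas[of x] xbb[of x] inv[of x]] int[of x] meas_fun_apply[OF P s] by simp
  obtain D :: "'a set" where D: "countable D" "\<And>\<omega> e. e > 0 \<Longrightarrow> \<exists>q\<in>D. dist \<omega> q < e"
    using countable_dense[OF cpt] by blast
  define G where "G = (\<lambda>qs. Bcontfun (monom_d qs)) ` {qs. set qs \<subseteq> D}"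
  have "{qs. set qs \<subseteq> D} = lists D" by auto
  then have cG: "countable G" unfolding G_def using D(1) by simp
  have "AE \<omega> in \<mu>. \<forall>g\<in>G. xb g \<omega> = blinfun_apply (meas_fun \<mu>) g"
    unfolding AE_ball_countable[OF cG] using ae by blast
  have "\<exists>\<omega>. \<forall>g\<in>G. xb g \<omega> = blinfun_apply (meas_fun \<mu>) g"
  proof (rule ccontr)
    assume nex: "\<not> (\<exists>\<omega>. \<forall>g\<in>G. xb g \<omega> = blinfun_apply (meas_fun \<mu>) g)"
    have "AE \<omega> in \<mu>. False"
      using \<open>AE \<omega> in \<mu>. \<forall>g\<in>G. xb g \<omega> = blinfun_apply (meas_fun \<mu>) g\<close> 
      by (rule eventually_mono) (use nex in blast)
    then show False by simp
  qed
  then obtain \<omega> where \<omega>: "\<forall>g\<in>G. xb g \<omega> = blinfun_apply (meas_fun \<mu>) g" by blast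
  define \<Lambda>1 where "\<Lambda>1 = Q (dirac_fun \<omega>)"
  define \<Lambda>2 where "\<Lambda>2 = meas_fun \<mu>"
  have onR: "blinfun_apply \<Lambda>1 (Bcontfun (val L)) = blinfun_apply \<Lambda>2 (Bcontfun (val L))"
    if L: "\<forall>p\<in>set L. set (snd p) \<subseteq> D" for L
  proof -
    have meq: "map (\<lambda>p. fst p * blinfun_apply \<Lambda>1 (Bcontfun (monom_d (snd p)))) L
        = map (\<lambda>p. fst p * blinfun_apply \<Lambda>2 (Bcontfun (monom_d (snd p)))) L"
    proof (rule map_cong[OF refl])
      fix p assume "p \<in> set L"
      then have "Bcontfun (monom_d (snd p)) \<in> G" unfolding G_def using L by auto
      then show "fst p * blinfun_apply \<Lambda>1 (Bcontfun (monom_d (snd p))) = fst p * blinfun_apply \<Lambda>2 (Bcontfun (monom_d (snd p)))"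
        using \<omega> unfolding \<Lambda>1_def \<Lambda>2_def xb_def by simp
    qed
    show ?thesis unfolding lin_val[OF cpt] meq by (rule refl)
  qed
  interpret R: function_ring_on "{val L | L. \<forall>p\<in>set L. set (snd p) \<subseteq> D}" UNIV
    by (rule ring_R[OF cpt D(2)])
  have eqQ: "Q (dirac_fun \<omega>) = meas_fun \<mu>"
  proof (rule blinfun_eqI)
    fix x :: "'a Xsp"
    have "\<bar>blinfun_apply \<Lambda>1 x - blinfun_apply \<Lambda>2 x\<bar> \<le> (norm \<Lambda>1 + norm \<Lambda>2) * e" if e: "e > 0" for e
    proof -
      obtain g where g: "g \<in> {val L | L. \<forall>p\<in>set L. set (snd p) \<subseteq> D}" "\<forall>\<omega>'\<in>UNIV. \<bar>apply_bcontfun x \<omega>' - g \<omega>'\<bar> < e"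
        using R.Stone_Weierstrass_basic[OF continuous_on_apply_bcontfun e] by blast
      then obtain L where L: "g = val L" "\<forall>p\<in>set L. set (snd p) \<subseteq> D" by blast
      define h where "h = Bcontfun (val L)"
      have hv: "apply_bcontfun h = val L" unfolding h_def
        by (rule Bcontfun_inverse[OF cont_bcontfun[OF cpt val_cont]])
      have nh: "norm (x - h) \<le> e"
      proof (rule norm_bound)
        fix \<omega>'
        show "norm (apply_bcontfun (x - h) \<omega>') \<le> e" using g(2) L(1) hv by (simp add: less_imp_le)
      qed
      have eq: "blinfun_apply \<Lambda>1 h = blinfun_apply \<Lambda>2 h" using onR[OF L(2)] h_def by simp
      have "blinfun_apply \<Lambda>1 x - blinfun_apply \<Lambda>2 x = blinfun_apply \<Lambda>1 (x - h) - blinfun_apply \<Lambda>2 (x - h)"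
        using eq by (simp add: blinfun.diff_right)
      also have "\<bar>\<dots>\<bar> \<le> \<bar>blinfun_apply \<Lambda>1 (x - h)\<bar> + \<bar>blinfun_apply \<Lambda>2 (x - h)\<bar>" by simp
      also have "\<dots> \<le> norm \<Lambda>1 * norm (x - h) + norm \<Lambda>2 * norm (x - h)"
        using norm_blinfun[of \<Lambda>1 "x - h"] norm_blinfun[of \<Lambda>2 "x - h"] by simp
      also have "\<dots> \<le> norm \<Lambda>1 * e + norm \<Lambda>2 * e"
        using nh by (intro add_mono mult_left_mono) auto
      finally show ?thesis by (simp add: algebra_simps)
    qed
    then have "blinfun_apply \<Lambda>1 x - blinfun_apply \<Lambda>2 x = 0"
      by (intro small_zero[of "norm \<Lambda>1 + norm \<Lambda>2"]) auto
    then show "blinfun_apply (Q (dirac_fun \<omega>)) x = blinfun_apply (meas_fun \<mu>) x"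
      unfolding \<Lambda>1_def \<Lambda>2_def by simp
  qed
  have "\<forall>x. (\<lambda>n. blinfun_apply (Vs n (dirac_fun \<omega>)) x) \<longlonglongrightarrow> blinfun_apply (meas_fun \<mu>) x"
    using W[where m="dirac_fun \<omega>"] unfolding eqQ by blast
  with eqQ show ?thesis by blast
qed

end
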